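(* Let $X=\{x_1,\dots,x_n\}$ and $Z=\{z_1,\dots,z_n\}$ be sets equipped with symmetric non-negative functions $d_X\colon X\times X\to\mathbb{R}^+$ and $d_Z\colon Z\times Z\to\mathbb{R}^+$, and let $f_\bullet\colon X\to Z$ be the bijection $x_i\mapsto z_i$. Then for all $a,b\in\mathbb{R}^+$, \[ \sum_{b'\in\mathbb{R}^+}\mathcal{M}^0_f(a,b')=m^X(a)\qquad\text{and}\qquad\sum_{a'\in\mathbb{R}^+}\mathcal{M}^0_f(a',b)=m^Z(b). \]
   Context: $\mathbb{R}^+=[0,\infty)$; the functions $d_X,d_Z$ may vanish on distinct points and need not satisfy the triangle inequality. For a finite set $Y=\{y_1,\dots,y_n\}$ with symmetric non-negative $d_Y$ and $r\ge 0$, let $G_r(Y)$ be the graph on $Y$ with an edge $[y,y']$ ($y\ne y'$) whenever $d_Y(y,y')\le r$ (for $r>0$ this is the Vietoris–Rips graph $\mathrm{VR}_r(Y)$; $\mathrm{VR}_0(Y)$ has no edges). $H_0(\mathrm{VR}_0(Y))$ is the $\mathbb{Z}_2$-vector space with basis $[y_1],\dots,[y_n]$. For $b\ge0$, $\ker^+_b(Y)$ is the span of all $[y]+[y']$ with $y,y'$ in the same connected component of $G_b(Y)$; $\ker^-_0(Y)=0$ and for $b>0$, $\ker^-_b(Y)$ is the span of all $[y]+[y']$ with $y,y'$ in the same component of $G_r(Y)$ for some $0\le r<b$. For $j\in\{2,\dots,n\}$ the death value $b_j$ of $y_j$ is the least $r\ge0$ such that $y_j$ is in the same component of $G_r(Y)$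 as some $y_i$ with $i<j$; for $a\ge 0$, $m^Y(a)$ is the number of $j\in\{2,\dots,n\}$ with $b_j=a$. $f_0\colon H_0(\mathrm{VR}_0(X))\to H_0(\mathrm{VR}_0(Z))$ is the linear isomorphism $[x_i]\mapsto[z_i]$, and \[ \mathcal{M}^0_f(a,b)=\dim\frac{f_0(\ker^+_a(X))\cap\ker^+_b(Z)}{f_0(\ker^-_a(X))\cap\ker^+_b(Z)+f_0(\ker^+_a(X))\cap\ker^-_b(Z)},\quad a,b\in\mathbb{R}^+. \] (Only finitely many terms of each sum are nonzero.) *)

theory Defs
  imports Complex_Main "HOL-Library.Z2" "HOL-Library.Function_Algebras"
begin

text \<open>Points of X (resp. Z) are indexed by 1..n; the bijection x_i -> z_i is the
identity on indices.
H_0(VR_0(Y)) over Z_2 is modelled by functions nat => bit (the chains supported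
on 1..n form the relevant finite-dimensional subspace); the basis vector [y_i] is
the indicator of i. The induced map f_0 is the identity on this representation.\<close>

type_synonym chain = "nat \<Rightarrow> bit"

definition scaleZ2 :: "bit \<Rightarrow> chain \<Rightarrow> chain" where
  "scaleZ2 c v = (\<lambda>i. c * v i)"

definition spanZ2 :: "chain set \<Rightarrow> chain set" where
  "spanZ2 S = module.span scaleZ2 S"

definition dimZ2 :: "chain set \<Rightarrow> nat" where
  "dimZ2 S = vector_space.dim scaleZ2 S"

definition gen :: "nat \<Rightarrow> chain" where
  "gen i = (\<lambda>j. if j = i then 1 else 0)"

definition edge :: "nat \<Rightarrow> (nat \<Rightarrow> nat \<Rightarrow> real) \<Rightarrow> real \<Rightarrow> nat \<Rightarrow> nat \<Rightarrow> bool" where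
  "edge n d r i j \<longleftrightarrow> i \<in> {1..n} \<and> j \<in> {1..n} \<and> i \<noteq> j \<and> d i j \<le> r"

definition samecomp :: "nat \<Rightarrow> (nat \<Rightarrow> nat \<Rightarrow> real) \<Rightarrow> real \<Rightarrow> nat \<Rightarrow> nat \<Rightarrow> bool" where
  "samecomp n d r i j \<longleftrightarrow> i \<in> {1..n} \<and> j \<in> {1..n} \<and> (edge n d r)\<^sup>*\<^sup>* i j"

definition ker_plus :: "nat \<Rightarrow> (nat \<Rightarrow> nat \<Rightarrow> real) \<Rightarrow> real \<Rightarrow> chain set" where
  "ker_plus n d b = spanZ2 {gen i + gen j | i j. samecomp n d b i j}"

definition ker_minus :: "nat \<Rightarrow> (nat \<Rightarrow> nat \<Rightarrow> real) \<Rightarrow> real \<Rightarrow> chain set" where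
  "ker_minus n d b = (if b = 0 then {0}
     else spanZ2 {gen i + gen j | i j. \<exists>r. 0 \<le> r \<and> r < b \<and> samecomp n d r i j})"

text \<open>Dimension of the quotient N / D for subspaces D \<subseteq> N (finite-dimensional):
  dim (N/D) = dim N - dim D.\<close>
definition quot_dim :: "chain set \<Rightarrow> chain set \<Rightarrow> nat" where
  "quot_dim N D = dimZ2 N - dimZ2 D"

definition M0 :: "nat \<Rightarrow> (nat \<Rightarrow> nat \<Rightarrow> real) \<Rightarrow> (nat \<Rightarrow> nat \<Rightarrow> real) \<Rightarrow> real \<Rightarrow> real \<Rightarrow> nat" where
  "M0 n dX dZ a b = quot_dim (ker_plus n dX a \<inter> ker_plus n dZ b)
      (spanZ2 ((ker_minus n dX a \<inter> ker_plus n dZ b) \<union> (ker_plus n dX a \<inter> ker_minus n dZ b)))"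

definition death :: "nat \<Rightarrow> (nat \<Rightarrow> nat \<Rightarrow> real) \<Rightarrow> nat \<Rightarrow> real" where
  "death n d j = (LEAST r. 0 \<le> r \<and> (\<exists>i. 1 \<le> i \<and> i < j \<and> samecomp n d r j i))"

definition mult :: "nat \<Rightarrow> (nat \<Rightarrow> nat \<Rightarrow> real) \<Rightarrow> real \<Rightarrow> nat" where
  "mult n d a = card {j \<in> {2..n}. death n d j = a}"

end

theory Submission
  imports Defs
begin


declare add_bit_eq_xor[simp del] mult_bit_eq_and[simp del]

interpretation Z: vector_space scaleZ2
  by unfold_locales (auto simp: scaleZ2_def fun_eq_iff algebra_simps)

lemma bit_add_self[simp]: "(c::bit) + c = 0"
  by (cases c) simp_all

lemma chain_add_self[simp]: "(x::chain) + x = 0"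
  by (simp add: fun_eq_iff)

lemma chain_minus[simp]: "- (x::chain) = x"
  by (simp add: fun_eq_iff)

lemma chain_diff[simp]: "(x::chain) - y = x + y"
  by (simp add: fun_eq_iff)

lemma scale0[simp]: "scaleZ2 0 v = 0" by (simp add: scaleZ2_def fun_eq_iff)

lemma sum_ind: assumes "finite B" "S \<subseteq> B"
  shows "(\<Sum>v\<in>B. scaleZ2 (if v \<in> S then 1 else 0) v) = \<Sum> S"
proof -
  have "(\<Sum>v\<in>B. scaleZ2 (if v \<in> S then 1 else 0) v) = (\<Sum>v\<in>B. if v \<in> S then v else 0)"
    by (rule sum.cong) auto
  also have "\<dots> = \<Sum> (B \<inter> S)" using assms(1) by (simp add: sum.If_cases)
  also have "B \<inter> S = S" using assms(2) by auto
  finally show ?thesis .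
qed

lemma card_span_indep:
  assumes fin: "finite B" and ind: "Z.independent B"
  shows "card (Z.span B) = 2 ^ card B"
proof -
  have eq: "Z.span B = (\<lambda>S. \<Sum> S) ` Pow B"
  proof
    show "Z.span B \<subseteq> (\<lambda>S. \<Sum> S) ` Pow B"
    proof
      fix x assume "x \<in> Z.span B"
      then obtain u where x: "x = (\<Sum>v\<in>B. scaleZ2 (u v) v)"
        using Z.span_finite[OF fin] by auto
      have "x = (\<Sum>v\<in>B. scaleZ2 (if v \<in> {v\<in>B. u v = 1} then 1 else 0) v)"
        unfolding x apply (rule sum.cong[OF refl]) subgoal for v by (cases "u v") auto done
      also have "\<dots> = \<Sum> {v\<in>B. u v = 1}" by (rule sum_ind[OF fin]) auto
      finally show "x \<in> (\<lambda>S. \<Sum> S) ` Pow B" by auto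
    qed
  next
    show "(\<lambda>S. \<Sum> S) ` Pow B \<subseteq> Z.span B"
    proof clarify
      fix x S assume "S \<subseteq> B"
      then show "\<Sum> S \<in> Z.span B" by (intro Z.span_sum) (auto intro: Z.span_base)
    qed
  qed
  have inj: "inj_on (\<lambda>S. \<Sum> S) (Pow B)"
  proof (rule inj_onI)
    fix S1 S2 assume S1: "S1 \<in> Pow B" and S2: "S2 \<in> Pow B" and e: "\<Sum> S1 = (\<Sum> S2 :: chain)"
    define u where "u v = (if v \<in> S1 then 1 else 0) + (if v \<in> S2 then 1 else (0::bit))" for v
    have "(\<Sum>v\<in>B. scaleZ2 (u v) v) = (\<Sum>v\<in>B. scaleZ2 (if v \<in> S1 then 1 else 0) v) + (\<Sum>v\<in>B. scaleZ2 (if v \<in> S2 then 1 else 0) v)"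
      unfolding u_def Z.scale_left_distrib sum.distrib ..
    also have "\<dots> = \<Sum> S1 + \<Sum> S2" using S1 S2 fin by (simp add: sum_ind)
    also have "\<dots> = 0" using e by simp
    finally have z: "(\<Sum>v\<in>B. scaleZ2 (u v) v) = 0" .
    have "\<forall>v\<in>B. u v = 0" using Z.independentD[OF ind fin order.refl z] by blast
    then show "S1 = S2" using S1 S2 unfolding u_def by (auto split: if_splits)
  qed
  have "card (Z.span B) = card (Pow B)" unfolding eq by (rule card_image[OF inj])
  also have "\<dots> = 2 ^ card B" using fin by (rule card_Pow)
  finally show ?thesis .
qed

lemma card_subspace:
  assumes fin: "finite V" and sub: "Z.subspace V"
  shows "card V = 2 ^ Z.dim V"
proof -
  obtain B where B: "B \<subseteq> V" "Z.independent B" "V \<subseteq> Z.span B" "card B = Z.dim V"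
    using Z.basis_exists by blast
  have "Z.span B = V"
    using B Z.span_minimal[OF B(1) sub] by auto
  moreover have "finite B" using B(1) fin finite_subset by blast
  ultimately show ?thesis using card_span_indep[of B] B by simp
qed

lemma dim_union_inter:
  assumes fU: "finite U" and fW: "finite W" and sU: "Z.subspace U" and sW: "Z.subspace W"
  shows "Z.dim (Z.span (U \<union> W)) + Z.dim (U \<inter> W) = Z.dim U + Z.dim W"
proof -
  define f where "f = (\<lambda>p::chain \<times> chain. fst p + snd p)"
  define P where "P = f ` (U \<times> W)"
  have spanUW: "Z.span (U \<union> W) = P"
  proof -
    have "Z.span U = U" "Z.span W = W" using sU sW by simp_all
    note e = this
    show ?thesis unfolding P_def f_def Z.span_Un e by (auto simp: image_iff) blast+
  qed
  have fP: "finite P" unfolding P_def using fU fW by simp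
  define I where "I = U \<inter> W"
  define F where "F s = {p \<in> U \<times> W. f p = s}" for s
  have UW: "U \<times> W = (\<Union>s\<in>P. F s)" unfolding F_def P_def by auto
  have fib: "card (F s) = card I" if "s \<in> P" for s
  proof -
    obtain u0 w0 where u0: "u0 \<in> U" and w0: "w0 \<in> W" and s: "s = u0 + w0"
      using \<open>s \<in> P\<close> unfolding P_def f_def by auto
    have "F s = (\<lambda>k. (u0 + k, w0 + k)) ` I"
    proof
      show "(\<lambda>k. (u0 + k, w0 + k)) ` I \<subseteq> F s"
        using u0 w0 sU sW unfolding F_def I_def f_def s
        by (auto intro: Z.subspace_add simp: add_ac)
    next
      show "F s \<subseteq> (\<lambda>k. (u0 + k, w0 + k)) ` I"
      proof clarify
        fix u w assume "(u, w) \<in> F s"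
        then have u: "u \<in> U" and w: "w \<in> W" and e: "u + w = u0 + w0"
          unfolding F_def f_def s by auto
        have k1: "u + u0 = w + w0"
        proof -
          have "u + u0 = u + (w + w) + u0" by simp
          also have "\<dots> = (u + w) + (w + u0)" by (simp only: add.assoc)
          also have "\<dots> = (u0 + w0) + (w + u0)" using e by simp
          also have "\<dots> = w + w0 + (u0 + u0)" by (simp only: add_ac)
          finally show ?thesis by simp
        qed
        have "u + u0 \<in> U" using Z.subspace_add[OF sU u u0] .
        moreover have "w + w0 \<in> W" using Z.subspace_add[OF sW w w0] .
        ultimately have kI: "u + u0 \<in> I" unfolding I_def using k1 by simp
        have "u0 + (u + u0) = u + (u0 + u0)" by (simp only: add_ac)
        then have uu: "u = u0 + (u + u0)" by simp
        have "w0 + (w + w0) = w + (w0 + w0)" by (simp only: add_ac)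
        then have "w = w0 + (u + u0)" using k1 by simp
        with uu
        show "(u, w) \<in> (\<lambda>k. (u0 + k, w0 + k)) ` I" using kI by blast
      qed
    qed
    moreover have "inj_on (\<lambda>k. (u0 + k, w0 + k)) I" by (rule inj_onI) simp
    ultimately show ?thesis by (simp add: card_image)
  qed
  have "card U * card W = card (U \<times> W)" by (simp add: card_cartesian_product)
  also have "\<dots> = (\<Sum>s\<in>P. card (F s))" unfolding UW
    by (rule card_UN_disjoint[OF fP]) (use fU fW in \<open>auto simp: F_def\<close>)
  also have "\<dots> = card P * card I" using fib by simp
  finally have eq: "card U * card W = card P * card I" .
  have sP: "Z.subspace P" unfolding spanUW[symmetric] by (rule Z.subspace_span)
  have sI: "Z.subspace I" unfolding I_def using sU sW by (rule Z.subspace_inter)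
  have fI: "finite I" unfolding I_def using fU by simp
  have "(2::nat) ^ (Z.dim U + Z.dim W) = 2 ^ (Z.dim P + Z.dim I)"
    using eq card_subspace[OF fU sU] card_subspace[OF fW sW] card_subspace[OF fP sP]
      card_subspace[OF fI sI] by (simp add: power_add)
  then show ?thesis unfolding spanUW I_def by simp
qed



definition Cn :: "nat \<Rightarrow> chain set" where
  "Cn n = {v. \<forall>i. i \<notin> {1..n} \<longrightarrow> v i = 0}"

lemma finite_Cn: "finite (Cn n)"
proof -
  have "Cn n \<subseteq> (\<lambda>S i. if i \<in> S then 1 else 0) ` Pow {1..n}"
  proof
    fix v assume v: "v \<in> Cn n"
    have "v = (\<lambda>i. if i \<in> {i\<in>{1..n}. v i = 1} then 1 else 0)"
      using v by (auto simp: Cn_def fun_eq_iff)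
    then show "v \<in> (\<lambda>S i. if i \<in> S then 1 else 0) ` Pow {1..n}"
      by (rule image_eqI) auto
  qed
  then show ?thesis by (rule finite_subset) simp
qed

lemma subspace_Cn: "Z.subspace (Cn n)"
  unfolding Z.subspace_def Cn_def by (auto simp: scaleZ2_def)

lemma gen_Cn: "i \<in> {1..n} \<Longrightarrow> gen i \<in> Cn n"
  by (auto simp: Cn_def gen_def)

lemma sum_chain_apply: "(\<Sum>j\<in>J. f j) (m::nat) = (\<Sum>j\<in>J. (f j m :: bit))"
  by (induction J rule: infinite_finite_induct) auto

lemma samecomp_refl: "i \<in> {1..n} \<Longrightarrow> samecomp n d r i i"
  by (simp add: samecomp_def)

lemma samecomp_trans: "samecomp n d r i j \<Longrightarrow> samecomp n d r j k \<Longrightarrow> samecomp n d r i k"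
  by (auto simp: samecomp_def)

lemma samecomp_sym:
  assumes sym: "\<And>i j. i \<in> {1..n} \<Longrightarrow> j \<in> {1..n} \<Longrightarrow> d i j = d j i"
  shows "samecomp n d r i j \<Longrightarrow> samecomp n d r j i"
proof -
  have es: "(edge n d r)\<inverse>\<inverse> = edge n d r"
    using sym by (auto simp: edge_def fun_eq_iff)
  assume "samecomp n d r i j"
  then show ?thesis unfolding samecomp_def
    by (metis es rtranclp_converseI)
qed

lemma samecomp_mono: "r \<le> r' \<Longrightarrow> samecomp n d r i j \<Longrightarrow> samecomp n d r' i j"
  unfolding samecomp_def
  by (auto elim!: rtranclp_mono[THEN predicate2D, rotated] simp: edge_def)

definition rep :: "nat \<Rightarrow> (nat \<Rightarrow> nat \<Rightarrow> real) \<Rightarrow> real \<Rightarrow> nat \<Rightarrow> nat" where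
  "rep n d r j = (LEAST k. samecomp n d r j k)"

definition JJ :: "nat \<Rightarrow> (nat \<Rightarrow> nat \<Rightarrow> real) \<Rightarrow> real \<Rightarrow> nat set" where
  "JJ n d r = {j \<in> {2..n}. \<exists>i. 1 \<le> i \<and> i < j \<and> samecomp n d r j i}"

lemma rep_props:
  assumes "j \<in> {1..n}"
  shows "samecomp n d r j (rep n d r j)" "rep n d r j \<le> j"
proof -
  have "samecomp n d r j j" using assms by (rule samecomp_refl)
  then show "samecomp n d r j (rep n d r j)" "rep n d r j \<le> j"
    unfolding rep_def by (rule LeastI, rule Least_le)
qed

lemma rep_range: "j \<in> {1..n} \<Longrightarrow> rep n d r j \<in> {1..n}"
  using rep_props(1) by (auto simp: samecomp_def)

lemma rep_eq:
  assumes sym: "\<And>i j. i \<in> {1..n} \<Longrightarrow> j \<in> {1..n} \<Longrightarrow> d i j = d j i"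
  and "samecomp n d r i j"
  shows "rep n d r i = rep n d r j"
proof -
  have "samecomp n d r i k \<longleftrightarrow> samecomp n d r j k" for k
  proof
    assume "samecomp n d r i k"
    with samecomp_sym[OF sym assms(2)] show "samecomp n d r j k" by (rule samecomp_trans)
  next
    assume "samecomp n d r j k"
    with assms(2) show "samecomp n d r i k" by (rule samecomp_trans)
  qed
  then have "samecomp n d r i = samecomp n d r j" by (intro ext)
  then show ?thesis unfolding rep_def by simp
qed

lemma JJ_rep: "j \<in> JJ n d r \<longleftrightarrow> j \<in> {1..n} \<and> rep n d r j < j"
proof
  assume "j \<in> JJ n d r"
  then obtain i where "j \<in> {2..n}" "i < j" "samecomp n d r j i" by (auto simp: JJ_def)
  then show "j \<in> {1..n} \<and> rep n d r j < j"
    unfolding rep_def by (auto intro: Least_le[THEN le_less_trans])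
next
  assume a: "j \<in> {1..n} \<and> rep n d r j < j"
  then have "rep n d r j \<in> {1..n}" using rep_range[of j n d r] by blast
  with a rep_props(1)[of j n d r] show "j \<in> JJ n d r"
    unfolding JJ_def by auto
qed

lemma gen_apply: "gen i k = (if k = i then 1 else 0)" by (simp add: gen_def)

lemma pair_sum_cancel: "((x::chain) + g) + (y + g) = x + y"
proof -
  have "(x + g) + (y + g) = x + y + (g + g)" by (simp only: add_ac)
  then show ?thesis by simp
qed

lemma ker_plus_Cn: "ker_plus n d r \<subseteq> Cn n"
  unfolding ker_plus_def spanZ2_def
proof (rule Z.span_minimal[OF _ subspace_Cn], clarify)
  fix i j assume "samecomp n d r i j"
  then have "i \<in> {1..n}" "j \<in> {1..n}" by (auto simp: samecomp_def)
  then show "gen i + gen j \<in> Cn n" by (intro Z.subspace_add[OF subspace_Cn] gen_Cn)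
qed

lemma dim_ker_plus:
  assumes sym: "\<And>i j. i \<in> {1..n} \<Longrightarrow> j \<in> {1..n} \<Longrightarrow> d i j = d j i"
  shows "Z.dim (ker_plus n d r) = card (JJ n d r)"
proof -
  define J where "J = JJ n d r"
  define b where "b j = gen j + gen (rep n d r j)" for j
  have finJ: "finite J" unfolding J_def JJ_def by simp
  have bj: "b j j = 1" if "j \<in> J" for j
    using that unfolding J_def JJ_rep b_def by (auto simp: gen_apply)
  have bk: "b j k = 0" if "j \<in> J" "j < k" for j k
    using that unfolding J_def JJ_rep b_def by (auto simp: gen_apply)
  have inj: "inj_on b J"
  proof (rule inj_onI, rule ccontr)
    fix x y assume xy: "x \<in> J" "y \<in> J" "b x = b y" "x \<noteq> y"
    show False
    proof (cases "x < y")
      case True then show ?thesis using bj[of y] bk[of x y] xy by auto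
    next
      case False then have "y < x" using xy by simp
      then show ?thesis using bj[of x] bk[of y x] xy by auto
    qed
  qed
  define Bs where "Bs = b ` J"
  have finB: "finite Bs" unfolding Bs_def using finJ by simp
  have indep: "Z.independent Bs"
  proof
    assume "Z.dependent Bs"
    then obtain u where u: "\<exists>v\<in>Bs. u v \<noteq> 0" and z: "(\<Sum>v\<in>Bs. scaleZ2 (u v) v) = 0"
      using Z.dependent_finite[OF finB] by blast
    define K where "K = {j\<in>J. u (b j) \<noteq> 0}"
    have finK: "finite K" "K \<noteq> {}" using finJ u unfolding K_def Bs_def by auto
    define m where "m = Max K"
    have mK: "m \<in> K" unfolding m_def using finK by simp
    have z2: "(\<Sum>j\<in>J. scaleZ2 (u (b j)) (b j)) = 0"
      using z unfolding Bs_def by (simp add: sum.reindex[OF inj])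
    have "(\<Sum>j\<in>J. scaleZ2 (u (b j)) (b j)) m = (\<Sum>j\<in>J. u (b j) * b j m)"
      by (simp add: sum_chain_apply scaleZ2_def)
    also have "\<dots> = (\<Sum>j\<in>J. if j = m then 1 else 0)"
    proof (rule sum.cong[OF refl])
      fix j assume j: "j \<in> J"
      show "u (b j) * b j m = (if j = m then 1 else 0)"
      proof (cases "j = m")
        case True then show ?thesis using mK bj[OF j] by (simp add: K_def)
      next
        case False
        show ?thesis
        proof (cases "j \<in> K")
          case True
          then have "j \<le> m" unfolding m_def using finK by simp
          then show ?thesis using False bk[OF j, of m] by simp
        next
          case False
          then show ?thesis using j \<open>j \<noteq> m\<close> by (simp add: K_def)
        qed
      qed
    qed
    also have "\<dots> = 1" using mK finJ by (simp add: K_def)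
    finally show False using z2 by simp
  qed
  have cardB: "card Bs = card J" unfolding Bs_def by (rule card_image[OF inj])
  have span: "ker_plus n d r = Z.span Bs"
    unfolding ker_plus_def spanZ2_def Z.span_eq
  proof
    show "{gen i + gen j |i j. samecomp n d r i j} \<subseteq> Z.span Bs"
    proof clarify
      fix i j assume ij: "samecomp n d r i j"
      have c: "gen k + gen (rep n d r k) \<in> Z.span Bs" if k: "k \<in> {1..n}" for k
      proof (cases "k \<in> J")
        case True then show ?thesis unfolding Bs_def b_def by (auto intro: Z.span_base)
      next
        case False
        then have "rep n d r k = k" using rep_props(2)[OF k, of d r] k unfolding J_def JJ_rep by simp
        then show ?thesis by (simp add: Z.span_zero)
      qed
      have i: "i \<in> {1..n}" and j: "j \<in> {1..n}" using ij by (auto simp: samecomp_def)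
      have "(gen i + gen (rep n d r i)) + (gen j + gen (rep n d r j)) \<in> Z.span Bs"
        by (rule Z.span_add[OF c[OF i] c[OF j]])
      then show "gen i + gen j \<in> Z.span Bs"
        using rep_eq[OF sym ij] pair_sum_cancel by metis
    qed
  next
    show "Bs \<subseteq> Z.span {gen i + gen j |i j. samecomp n d r i j}"
    proof
      fix v assume "v \<in> Bs"
      then obtain j where j: "j \<in> J" "v = b j" unfolding Bs_def by auto
      then have "j \<in> {1..n}" unfolding J_def JJ_rep by simp
      then have "samecomp n d r j (rep n d r j)" by (rule rep_props(1))
      then show "v \<in> Z.span {gen i + gen j |i j. samecomp n d r i j}"
        using j unfolding b_def by (auto intro: Z.span_base)
    qed
  qed
  show ?thesis unfolding span Z.dim_span_eq_card_independent[OF indep] cardB J_def ..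
qed



definition DD :: "nat \<Rightarrow> (nat \<Rightarrow> nat \<Rightarrow> real) \<Rightarrow> real set" where
  "DD n d = insert 0 ((\<lambda>(i,k). d i k) ` ({1..n} \<times> {1..n}))"

definition fl :: "nat \<Rightarrow> (nat \<Rightarrow> nat \<Rightarrow> real) \<Rightarrow> real \<Rightarrow> real" where
  "fl n d r = Max {s \<in> DD n d. s \<le> r}"

definition pr :: "nat \<Rightarrow> (nat \<Rightarrow> nat \<Rightarrow> real) \<Rightarrow> real \<Rightarrow> real" where
  "pr n d a = Max {s \<in> DD n d. s < a}"

lemma finite_DD: "finite (DD n d)" by (simp add: DD_def)

lemma DD_in: "i \<in> {1..n} \<Longrightarrow> k \<in> {1..n} \<Longrightarrow> d i k \<in> DD n d"
  unfolding DD_def by (auto intro!: image_eqI[where x="(i,k)"])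

lemma zero_DD: "0 \<in> DD n d" by (simp add: DD_def)

lemma fl_props:
  assumes "0 \<le> r"
  shows "fl n d r \<in> DD n d" "fl n d r \<le> r" "0 \<le> fl n d r"
    "\<And>s. s \<in> DD n d \<Longrightarrow> s \<le> r \<Longrightarrow> s \<le> fl n d r"
proof -
  have f: "finite {s \<in> DD n d. s \<le> r}" using finite_DD by simp
  have ne: "0 \<in> {s \<in> DD n d. s \<le> r}" using assms zero_DD by simp
  have "fl n d r \<in> {s \<in> DD n d. s \<le> r}" unfolding fl_def using f ne by (intro Max_in) auto
  then show "fl n d r \<in> DD n d" "fl n d r \<le> r" by auto
  show "0 \<le> fl n d r" unfolding fl_def using f ne by (rule Max_ge)
  show "\<And>s. s \<in> DD n d \<Longrightarrow> s \<le> r \<Longrightarrow> s \<le> fl n d r" unfolding fl_def using f by (intro Max_ge) auto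
qed

lemma pr_props:
  assumes "0 < a"
  shows "pr n d a \<in> DD n d" "pr n d a < a" "0 \<le> pr n d a"
    "\<And>s. s \<in> DD n d \<Longrightarrow> s < a \<Longrightarrow> s \<le> pr n d a"
proof -
  have f: "finite {s \<in> DD n d. s < a}" using finite_DD by simp
  have ne: "0 \<in> {s \<in> DD n d. s < a}" using assms zero_DD by simp
  have "pr n d a \<in> {s \<in> DD n d. s < a}" unfolding pr_def using f ne by (intro Max_in) auto
  then show "pr n d a \<in> DD n d" "pr n d a < a" by auto
  show "0 \<le> pr n d a" unfolding pr_def using f ne by (rule Max_ge)
  show "\<And>s. s \<in> DD n d \<Longrightarrow> s < a \<Longrightarrow> s \<le> pr n d a" unfolding pr_def using f by (intro Max_ge) auto
qed

lemma edge_fl: assumes "0 \<le> r" shows "edge n d r = edge n d (fl n d r)"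
proof (intro ext)
  fix i j
  show "edge n d r i j = edge n d (fl n d r) i j"
    unfolding edge_def using fl_props[OF assms, where n=n and d=d] DD_in[where i=i and k=j and n=n and d=d] by force
qed

lemma samecomp_fl: "0 \<le> r \<Longrightarrow> samecomp n d r = samecomp n d (fl n d r)"
  unfolding samecomp_def[abs_def] by (simp add: edge_fl[symmetric])

lemma pre_samecomp:
  assumes "0 < a"
  shows "(\<exists>r. 0 \<le> r \<and> r < a \<and> samecomp n d r i j) \<longleftrightarrow> samecomp n d (pr n d a) i j"
proof
  assume "\<exists>r. 0 \<le> r \<and> r < a \<and> samecomp n d r i j"
  then obtain r where r: "0 \<le> r" "r < a" "samecomp n d r i j" by blast
  then have s: "samecomp n d (fl n d r) i j" using samecomp_fl[OF r(1)] by simp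
  have "fl n d r \<le> pr n d a" using fl_props[OF r(1), where n=n and d=d] r(2) by (intro pr_props(4)[OF assms]) auto
  then show "samecomp n d (pr n d a) i j" using s by (rule samecomp_mono)
next
  assume "samecomp n d (pr n d a) i j"
  then show "\<exists>r. 0 \<le> r \<and> r < a \<and> samecomp n d r i j" using pr_props[OF assms, where n=n and d=d] by blast
qed

lemma ker_minus_pos: "0 < a \<Longrightarrow> ker_minus n d a = ker_plus n d (pr n d a)"
  unfolding ker_minus_def ker_plus_def by (simp add: pre_samecomp)

lemma ker_minus_0: "ker_minus n d 0 = {0}"
  by (simp add: ker_minus_def)

lemma dim_zero: "Z.dim {0} = 0"
  by (metis Z.dim_eq_card_independent Z.independent_empty card.empty Z.dim_span Z.span_empty)

lemma death_char:
  assumes nn: "\<And>i j. i \<in> {1..n} \<Longrightarrow> j \<in> {1..n} \<Longrightarrow> 0 \<le> d i j"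
    and j: "j \<in> {2..n}" and a: "0 \<le> a"
  shows "death n d j = a \<longleftrightarrow> j \<in> JJ n d a \<and> \<not> (\<exists>r. 0 \<le> r \<and> r < a \<and> j \<in> JJ n d r)"
proof -
  define Q where "Q r \<longleftrightarrow> 0 \<le> r \<and> (\<exists>i. 1 \<le> i \<and> i < j \<and> samecomp n d r j i)" for r
  have QJ: "Q r \<longleftrightarrow> 0 \<le> r \<and> j \<in> JJ n d r" for r using j by (auto simp: Q_def JJ_def)
  have "\<exists>m. Q m \<and> (\<forall>r. Q r \<longrightarrow> m \<le> r)"
  proof -
    define S where "S = {s \<in> DD n d. Q s}"
    have j1: "j \<in> {1..n}" "(1::nat) \<in> {1..n}" "j \<noteq> 1" "1 < j" using j by auto
    have "edge n d (d j 1) j 1" using j1 by (simp add: edge_def)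
    then have "samecomp n d (d j 1) j 1" using j1 by (auto simp: samecomp_def)
    then have "Q (d j 1)" unfolding Q_def using nn[OF j1(1,2)] j1 by auto
    then have dS: "d j 1 \<in> S" unfolding S_def using DD_in[OF j1(1,2), where d=d] by simp
    have fS: "finite S" unfolding S_def using finite_DD by simp
    define m where "m = Min S"
    have mS: "m \<in> S" unfolding m_def using fS dS by (intro Min_in) auto
    have "m \<le> r" if "Q r" for r
    proof -
      have r0: "0 \<le> r" using that by (simp add: Q_def)
      have "Q (fl n d r)" using that fl_props(3)[OF r0, where n=n and d=d]
        unfolding Q_def samecomp_fl[OF r0] by simp
      then have "fl n d r \<in> S" unfolding S_def using fl_props(1)[OF r0] by simp
      then have "m \<le> fl n d r" unfolding m_def using fS by simp
      also have "\<dots> \<le> r" by (rule fl_props(2)[OF r0])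
      finally show ?thesis .
    qed
    then show ?thesis using mS unfolding S_def by blast
  qed
  then obtain m where m: "Q m" "\<forall>r. Q r \<longrightarrow> m \<le> r" by blast
  have "death n d j = (LEAST r. Q r)" unfolding death_def Q_def ..
  also have "\<dots> = m" by (rule Least_equality) (use m in auto)
  finally have dm: "death n d j = m" .
  have "death n d j = a \<longleftrightarrow> Q a \<and> (\<forall>r. Q r \<longrightarrow> a \<le> r)"
    using dm m by (auto intro: order.antisym)
  also have "\<dots> \<longleftrightarrow> j \<in> JJ n d a \<and> \<not> (\<exists>r. 0 \<le> r \<and> r < a \<and> j \<in> JJ n d r)"
    unfolding QJ using a by (meson not_le)
  finally show ?thesis .
qed

lemma Jm_eq:
  assumes "0 < a"
  shows "{j. \<exists>r. 0 \<le> r \<and> r < a \<and> j \<in> JJ n d r} = JJ n d (pr n d a)"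
proof -
  have "(\<exists>r. 0 \<le> r \<and> r < a \<and> j \<in> JJ n d r) \<longleftrightarrow> j \<in> JJ n d (pr n d a)" for j
  proof -
    have "(\<exists>r. 0 \<le> r \<and> r < a \<and> j \<in> JJ n d r) \<longleftrightarrow>
      j \<in> {2..n} \<and> (\<exists>i. 1 \<le> i \<and> i < j \<and> (\<exists>r. 0 \<le> r \<and> r < a \<and> samecomp n d r j i))"
      unfolding JJ_def by blast
    also have "\<dots> \<longleftrightarrow> j \<in> JJ n d (pr n d a)"
      unfolding JJ_def pre_samecomp[OF assms] by simp
    finally show ?thesis .
  qed
  then show ?thesis by blast
qed

lemma mult_dim:
  assumes sym: "\<And>i j. i \<in> {1..n} \<Longrightarrow> j \<in> {1..n} \<Longrightarrow> d i j = d j i"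
    and nn: "\<And>i j. i \<in> {1..n} \<Longrightarrow> j \<in> {1..n} \<Longrightarrow> 0 \<le> d i j"
    and a: "0 \<le> a"
  shows "int (mult n d a) = int (Z.dim (ker_plus n d a)) - int (Z.dim (ker_minus n d a))"
proof -
  define Jm where "Jm = {j. \<exists>r. 0 \<le> r \<and> r < a \<and> j \<in> JJ n d r}"
  have "{j \<in> {2..n}. death n d j = a} = JJ n d a - Jm"
  proof -
    have dc: "death n d j = a \<longleftrightarrow> j \<in> JJ n d a \<and> j \<notin> Jm" if "j \<in> {2..n}" for j
      using death_char[where n=n and d=d, OF nn that a] unfolding Jm_def by simp
    have "JJ n d a \<subseteq> {2..n}" by (auto simp: JJ_def)
    then show ?thesis using dc by blast
  qed
  then have m: "mult n d a = card (JJ n d a - Jm)" by (simp add: mult_def)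
  have fin: "finite (JJ n d a)" by (simp add: JJ_def)
  show ?thesis
  proof (cases "a = 0")
    case True
    then have "Jm = {}" unfolding Jm_def by auto
    moreover note dk = dim_ker_plus[where n=n and d=d and r=0, OF sym]
    ultimately show ?thesis using m True by (simp add: ker_minus_0 dim_zero)
  next
    case False
    then have a0: "0 < a" using a by simp
    have Jm: "Jm = JJ n d (pr n d a)" unfolding Jm_def by (rule Jm_eq[OF a0])
    have sub: "Jm \<subseteq> JJ n d a"
    proof -
      have pa: "pr n d a \<le> a" using pr_props(2)[OF a0, where n=n and d=d] by simp
      show ?thesis unfolding Jm by (force simp: JJ_def dest: samecomp_mono[OF pa])
    qed
    have "int (card (JJ n d a - Jm)) = int (card (JJ n d a)) - int (card Jm)"
      using card_Diff_subset[OF finite_subset[OF sub fin] sub] card_mono[OF fin sub] by simp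
    moreover note dk1 = dim_ker_plus[where n=n and d=d and r=a, OF sym]
    moreover note dk2 = dim_ker_plus[where n=n and d=d and r="pr n d a", OF sym]
    ultimately show ?thesis using m Jm
      by (simp add: ker_minus_pos[OF a0])
  qed
qed



definition prevT :: "real set \<Rightarrow> int \<Rightarrow> (real \<Rightarrow> int) \<Rightarrow> real \<Rightarrow> int" where
  "prevT T c F t = (if {s\<in>T. s < t} = {} then c else F (Max {s\<in>T. s < t}))"

lemma telescope:
  assumes "finite T" "T \<noteq> {}"
  shows "(\<Sum>t\<in>T. F t - prevT T c F t) = F (Max T) - c"
  using assms
proof (induction T rule: finite_linorder_max_induct)
  case empty then show ?case by simp
next
  case (insert b A)
  have eqA: "prevT (insert b A) c F t = prevT A c F t" if "t \<in> A" for t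
  proof -
    have "{s \<in> insert b A. s < t} = {s\<in>A. s < t}" using insert.hyps(2) that by auto
    then show ?thesis unfolding prevT_def by presburger
  qed
  have bA: "b \<notin> A" using insert.hyps(2) by auto
  have pb: "{s \<in> insert b A. s < b} = A" using insert.hyps(2) by auto
  have s: "(\<Sum>t\<in>insert b A. F t - prevT (insert b A) c F t)
      = (F b - prevT (insert b A) c F b) + (\<Sum>t\<in>A. F t - prevT A c F t)"
    using insert.hyps(1) bA eqA by (simp add: sum.insert)
  show ?case
  proof (cases "A = {}")
    case True
    have "prevT (insert b A) c F b = c" unfolding prevT_def pb True by simp
    then show ?thesis using s True by simp
  next
    case False
    have "Max A < b" using insert.hyps(2) Max_in[OF insert.hyps(1) False] by blast
    then have MA: "Max (insert b A) = b"
      by (simp add: Max_insert[OF insert.hyps(1) False] max_def)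
    have "prevT (insert b A) c F b = F (Max A)" unfolding prevT_def pb using False by simp
    then show ?thesis using s insert.IH[OF False] MA by simp
  qed
qed

lemma dim_mono_fin:
  assumes "finite W" "Z.subspace V" "Z.subspace W" "V \<subseteq> W"
  shows "Z.dim V \<le> Z.dim W"
proof -
  have fV: "finite V" using assms finite_subset by blast
  have "card V \<le> card W" using assms by (simp add: card_mono)
  then have "(2::nat) ^ Z.dim V \<le> 2 ^ Z.dim W"
    using card_subspace[OF fV assms(2)] card_subspace[OF assms(1,3)] by simp
  then show ?thesis by simp
qed

lemma M_formula:
  assumes sA: "Z.subspace A" "Z.subspace A'" and sB: "Z.subspace B" "Z.subspace B'"
    and AA: "A' \<subseteq> A" and BB: "B' \<subseteq> B" and AC: "A \<subseteq> Cn n"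
  shows "int (quot_dim (A \<inter> B) (spanZ2 ((A' \<inter> B) \<union> (A \<inter> B'))))
    = (int (Z.dim (A \<inter> B)) - int (Z.dim (A \<inter> B'))) - (int (Z.dim (A' \<inter> B)) - int (Z.dim (A' \<inter> B')))"
proof -
  have fA: "finite A" using AC finite_Cn finite_subset by blast
  define U where "U = A' \<inter> B"
  define W where "W = A \<inter> B'"
  have fU: "finite U" "finite W" "finite (A \<inter> B)" using fA AA unfolding U_def W_def
    by (auto intro: finite_subset)
  have sU: "Z.subspace U" "Z.subspace W" "Z.subspace (A \<inter> B)"
    unfolding U_def W_def using sA sB by (auto intro: Z.subspace_inter)
  have UW: "U \<inter> W = A' \<inter> B'" unfolding U_def W_def using AA BB by auto
  have du: "Z.dim (Z.span (U \<union> W)) + Z.dim (A' \<inter> B') = Z.dim U + Z.dim W"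
    using dim_union_inter[OF fU(1,2) sU(1,2)] UW by simp
  have "Z.span (U \<union> W) \<subseteq> A \<inter> B"
    using AA BB by (intro Z.span_minimal[OF _ sU(3)]) (auto simp: U_def W_def)
  then have le: "Z.dim (Z.span (U \<union> W)) \<le> Z.dim (A \<inter> B)"
    by (intro dim_mono_fin[OF fU(3) Z.subspace_span sU(3)])
  show ?thesis
    unfolding quot_dim_def dimZ2_def spanZ2_def U_def[symmetric] W_def[symmetric]
    using le du unfolding U_def W_def by simp
qed

lemma sub_kp: "Z.subspace (ker_plus n d r)"
  unfolding ker_plus_def spanZ2_def by (rule Z.subspace_span)

lemma sub_km: "Z.subspace (ker_minus n d r)"
  unfolding ker_minus_def spanZ2_def by (auto intro: Z.subspace_span simp: Z.subspace_0)

lemma kp_mono: "r \<le> r' \<Longrightarrow> ker_plus n d r \<subseteq> ker_plus n d r'"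
  unfolding ker_plus_def spanZ2_def
  by (rule Z.span_mono) (blast intro: samecomp_mono)

lemma km_kp: "0 \<le> a \<Longrightarrow> ker_minus n d a \<subseteq> ker_plus n d a"
proof (cases "a = 0")
  case True then show ?thesis
    by (simp add: ker_minus_0 ker_plus_def spanZ2_def Z.span_zero)
next
  case False
  assume "0 \<le> a" then have a0: "0 < a" using False by simp
  show ?thesis unfolding ker_minus_pos[OF a0]
    by (rule kp_mono) (use pr_props(2)[OF a0, where n=n and d=d] in simp)
qed

lemma kp_fl: "0 \<le> r \<Longrightarrow> ker_plus n d r = ker_plus n d (fl n d r)"
  unfolding ker_plus_def by (simp add: samecomp_fl[symmetric])

definition EE :: "nat \<Rightarrow> chain set" where
  "EE n = Z.span {gen i + gen j | i j. i \<in> {1..n} \<and> j \<in> {1..n}}"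

lemma kp_EE: "ker_plus n d r \<subseteq> EE n"
  unfolding ker_plus_def spanZ2_def EE_def
  by (rule Z.span_mono) (auto simp: samecomp_def)

lemma EE_kp:
  assumes "\<And>i j. i \<in> {1..n} \<Longrightarrow> j \<in> {1..n} \<Longrightarrow> d i j \<le> r"
  shows "EE n \<subseteq> ker_plus n d r"
  unfolding ker_plus_def spanZ2_def EE_def
proof (rule Z.span_mono, clarify)
  fix i j :: nat assume ij: "i \<in> {1..n}" "j \<in> {1..n}"
  have "samecomp n d r i j"
  proof (cases "i = j")
    case True then show ?thesis using ij by (simp add: samecomp_refl)
  next
    case False
    then have "edge n d r i j" using ij assms by (simp add: edge_def)
    then show ?thesis using ij by (auto simp: samecomp_def)
  qed
  then show "\<exists>i' j'. gen i + gen j = gen i' + gen j' \<and> samecomp n d r i' j'" by blast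
qed

lemma main_sum:
  assumes symX: "\<And>i j. i \<in> {1..n} \<Longrightarrow> j \<in> {1..n} \<Longrightarrow> dX i j = dX j i"
      and nnX: "\<And>i j. i \<in> {1..n} \<Longrightarrow> j \<in> {1..n} \<Longrightarrow> 0 \<le> dX i j"
      and nnZ: "\<And>i j. i \<in> {1..n} \<Longrightarrow> j \<in> {1..n} \<Longrightarrow> 0 \<le> dZ i j"
      and a: "0 \<le> a"
  shows "finite {t. 0 \<le> t \<and> M0 n dX dZ a t \<noteq> 0}
       \<and> (\<Sum>t\<in>{t. 0 \<le> t \<and> M0 n dX dZ a t \<noteq> 0}. M0 n dX dZ a t) = mult n dX a"
proof -
  define A where "A = ker_plus n dX a"
  define A' where "A' = ker_minus n dX a"
  define B where "B t = ker_plus n dZ t" for t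
  define B' where "B' t = ker_minus n dZ t" for t
  define T where "T = DD n dZ"
  define g where "g V t = int (Z.dim (V \<inter> B t)) - int (Z.dim (V \<inter> B' t))" for V t
  have sA: "Z.subspace A" "Z.subspace A'" unfolding A_def A'_def by (rule sub_kp, rule sub_km)
  have AA: "A' \<subseteq> A" unfolding A_def A'_def using a by (rule km_kp)
  have AC: "A \<subseteq> Cn n" unfolding A_def by (rule ker_plus_Cn)
  have Mf: "int (M0 n dX dZ a t) = g A t - g A' t" if t: "0 \<le> t" for t
    unfolding M0_def g_def B_def B'_def
    using M_formula[OF sA sub_kp sub_km AA km_kp[OF t] AC] unfolding A_def A'_def .
  have T0: "\<forall>t\<in>T. 0 \<le> t" using nnZ by (auto simp: T_def DD_def)
  have finT: "finite T" by (simp add: T_def finite_DD)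
  have zT: "0 \<in> T" by (simp add: T_def zero_DD)
  have g_eq: "g V t = 0" if "0 \<le> t" "t \<notin> T" for V t
  proof -
    have t0: "0 < t" using that zT by (cases "t = 0") auto
    have "{s\<in>T. s<t} = {s\<in>T. s \<le> t}" using that(2) by (auto simp: order.order_iff_strict)
    then have "pr n dZ t = fl n dZ t" by (simp add: pr_def fl_def T_def)
    then have "B' t = B t" unfolding B_def B'_def using ker_minus_pos[where n=n and d=dZ, OF t0] kp_fl[where n=n and d=dZ, OF that(1)] by simp
    then show ?thesis by (simp add: g_def)
  qed
  have M_zero: "M0 n dX dZ a t = 0" if "0 \<le> t" "t \<notin> T" for t
    using Mf[OF that(1)] g_eq[OF that] by simp
  define S where "S = {t. 0 \<le> t \<and> M0 n dX dZ a t \<noteq> 0}"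
  have ST: "S \<subseteq> T"
  proof
    fix t assume "t \<in> S"
    then have "0 \<le> t" "M0 n dX dZ a t \<noteq> 0" unfolding S_def by auto
    then show "t \<in> T" using M_zero[of t] by auto
  qed
  have finS: "finite S" using finite_subset[OF ST finT] .
  have sumST: "(\<Sum>t\<in>S. M0 n dX dZ a t) = (\<Sum>t\<in>T. M0 n dX dZ a t)"
    by (rule sum.mono_neutral_left[OF finT ST]) (use T0 in \<open>auto simp: S_def\<close>)
  have tel: "(\<Sum>t\<in>T. g V t) = int (Z.dim V)" if V: "V \<subseteq> A" "Z.subspace V" for V
  proof -
    define F where "F t = int (Z.dim (V \<inter> B t))" for t
    have pv: "int (Z.dim (V \<inter> B' t)) = prevT T 0 F t" if t: "t \<in> T" for t
    proof (cases "t = 0")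
      case True
      have "{s\<in>T. s < t} = {}" using T0 True by auto
      moreover have "V \<inter> B' t = {0}" using True Z.subspace_0[OF V(2)] by (auto simp: B'_def ker_minus_0)
      ultimately show ?thesis by (simp add: prevT_def dim_zero)
    next
      case False
      then have t0: "0 < t" using T0 t by force
      have "0 \<in> {s\<in>T. s<t}" using zT t0 by simp
      then have ne: "{s\<in>T. s<t} \<noteq> {}" by blast
      have mx: "Max {s\<in>T. s<t} = pr n dZ t" by (simp add: pr_def T_def)
      have "prevT T 0 F t = F (Max {s\<in>T. s<t})" by (simp only: prevT_def if_not_P[OF ne])
      then show ?thesis using mx
        by (simp add: F_def B'_def B_def ker_minus_pos[where n=n and d=dZ, OF t0])
    qed
    have VB: "V \<inter> B (Max T) = V"
    proof -
      have "dZ i j \<le> Max T" if "i \<in> {1..n}" "j \<in> {1..n}" for i j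
        using finT DD_in[OF that, where d=dZ] by (simp add: T_def)
      then have "EE n \<subseteq> B (Max T)" unfolding B_def by (intro EE_kp)
      moreover have "V \<subseteq> EE n" using V(1) kp_EE unfolding A_def by blast
      ultimately show ?thesis by auto
    qed
    have FM: "F (Max T) = int (Z.dim V)" using VB by (simp add: F_def)
    have "(\<Sum>t\<in>T. g V t) = (\<Sum>t\<in>T. F t - prevT T 0 F t)"
      by (rule sum.cong[OF refl]) (simp add: g_def F_def pv)
    also have "\<dots> = F (Max T) - 0" by (rule telescope[OF finT]) (use zT in auto)
    finally show ?thesis using FM by simp
  qed
  have "int (\<Sum>t\<in>S. M0 n dX dZ a t) = (\<Sum>t\<in>T. int (M0 n dX dZ a t))" by (simp add: sumST)
  also have "\<dots> = (\<Sum>t\<in>T. g A t - g A' t)" by (rule sum.cong[OF refl]) (use T0 Mf in auto)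
  also have "\<dots> = (\<Sum>t\<in>T. g A t) - (\<Sum>t\<in>T. g A' t)" by (rule sum_subtractf)
  also have "\<dots> = int (Z.dim A) - int (Z.dim A')"
    using tel[OF order.refl sA(1)] tel[OF AA sA(2)] by simp
  also have "\<dots> = int (mult n dX a)" unfolding A_def A'_def
    by (rule mult_dim[where n=n and d=dX, OF symX nnX a, symmetric])
  finally have "int (\<Sum>t\<in>S. M0 n dX dZ a t) = int (mult n dX a)" .
  then have "(\<Sum>t\<in>S. M0 n dX dZ a t) = mult n dX a" by (simp only: of_nat_eq_iff)
  then show ?thesis using finS unfolding S_def by simp
qed


lemma M0_swap: "M0 n dX dZ a b = M0 n dZ dX b a"
proof -
  have e1: "ker_plus n dX a \<inter> ker_plus n dZ b = ker_plus n dZ b \<inter> ker_plus n dX a" by blast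
  have e2: "(ker_minus n dX a \<inter> ker_plus n dZ b) \<union> (ker_plus n dX a \<inter> ker_minus n dZ b)
      = (ker_minus n dZ b \<inter> ker_plus n dX a) \<union> (ker_plus n dZ b \<inter> ker_minus n dX a)" by blast
  show ?thesis unfolding M0_def e1 e2 ..
qed

theorem lemma3:
  fixes n :: nat and dX dZ :: "nat \<Rightarrow> nat \<Rightarrow> real" and a b :: real
  assumes symX: "\<And>i j. i \<in> {1..n} \<Longrightarrow> j \<in> {1..n} \<Longrightarrow> dX i j = dX j i"
      and nnX: "\<And>i j. i \<in> {1..n} \<Longrightarrow> j \<in> {1..n} \<Longrightarrow> 0 \<le> dX i j"
      and symZ: "\<And>i j. i \<in> {1..n} \<Longrightarrow> j \<in> {1..n} \<Longrightarrow> dZ i j = dZ j i"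
      and nnZ: "\<And>i j. i \<in> {1..n} \<Longrightarrow> j \<in> {1..n} \<Longrightarrow> 0 \<le> dZ i j"
      and a: "0 \<le> a" and b: "0 \<le> b"
  shows "finite {b'. 0 \<le> b' \<and> M0 n dX dZ a b' \<noteq> 0}
       \<and> (\<Sum>b'\<in>{b'. 0 \<le> b' \<and> M0 n dX dZ a b' \<noteq> 0}. M0 n dX dZ a b') = mult n dX a
       \<and> finite {a'. 0 \<le> a' \<and> M0 n dX dZ a' b \<noteq> 0}
       \<and> (\<Sum>a'\<in>{a'. 0 \<le> a' \<and> M0 n dX dZ a' b \<noteq> 0}. M0 n dX dZ a' b) = mult n dZ b"
proof -
  have p1: "finite {b'. 0 \<le> b' \<and> M0 n dX dZ a b' \<noteq> 0}
       \<and> (\<Sum>b'\<in>{b'. 0 \<le> b' \<and> M0 n dX dZ a b' \<noteq> 0}. M0 n dX dZ a b') = mult n dX a"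
    by (rule main_sum[where n=n and dX=dX and dZ=dZ and a=a, OF symX nnX nnZ a])
  have p2: "finite {a'. 0 \<le> a' \<and> M0 n dZ dX b a' \<noteq> 0}
       \<and> (\<Sum>a'\<in>{a'. 0 \<le> a' \<and> M0 n dZ dX b a' \<noteq> 0}. M0 n dZ dX b a') = mult n dZ b"
    by (rule main_sum[where n=n and dX=dZ and dZ=dX and a=b, OF symZ nnZ nnX b])
  have sw: "M0 n dX dZ a' b = M0 n dZ dX b a'" for a' by (rule M0_swap)
  show ?thesis using p1 p2 unfolding sw by simp
qed

end
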